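(* Let $\mathcal{R}>0$, $\alpha>0$, $\beta>0$ be fixed, and let $\bar\gamma_{\mathrm{D}}>0$ with $\bar\gamma_{\mathrm{R}}=\alpha\bar\gamma_{\mathrm{D}}$ and $\bar\gamma_{\mathrm{E}}=\bar\gamma_{\mathrm{R}}/\beta$. Let $h_{\mathrm{S},\mathrm{R}},h_{\mathrm{R},\mathrm{D}},h_{\mathrm{R},\mathrm{E}}$ be independent $\mathcal{CN}(0,1)$ random variables, and define $$\mathcal{R}^{1}_{\mathrm{R}\to\mathrm{D}}=\max\left\{\log_2\frac{1+\bar\gamma_{\mathrm{D}}|h_{\mathrm{R},\mathrm{D}}|^2}{1+\bar\gamma_{\mathrm{E}}|h_{\mathrm{R},\mathrm{E}}|^2},0\right\},\qquad \mathcal{R}^{1}_{\mathrm{S}\to\mathrm{R}}=\log_2\left(1+\bar\gamma_{\mathrm{R}}|h_{\mathrm{S},\mathrm{R}}|^2\right),$$ $\mathcal{R}_1=\max\{\min\{\mathcal{R}^{1}_{\mathrm{R}\to\mathrm{D}},\mathcal{R}^{1}_{\mathrm{S}\to\mathrm{R}}\},0\}$ and $\mathcal{P}_1=\Pr(\mathcal{R}_1<\mathcal{R})$. Then as $\bar\gamma_{\mathrm{D}}\to\infty$, $$\mathcal{P}_1\approx\mathcal{P}_1^{\lim}+\hat{\mathcal{M}}_1\bar\gamma_{\mathrm{D}}^{-1},$$ in the sense that $\mathcal{P}_1\to\mathcal{P}_1^{\lim}$ and $\bar\gamma_{\mathrm{D}}(\mathcal{P}_1-\mathcal{P}_1^{\lim})\to\hat{\mathcal{M}}_1$,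 where $$\mathcal{P}_1^{\lim}=1-\frac{1}{1+\frac{\alpha}{\beta}2^{\mathcal{R}}},\qquad \hat{\mathcal{M}}_1=\frac{(2^{\mathcal{R}}-1)(1+1/\alpha)}{1+\frac{\alpha}{\beta}2^{\mathcal{R}}}.$$
   Context: $\mathcal{CN}(0,1)$ denotes a circularly symmetric complex Gaussian random variable with zero mean and unit variance (Rayleigh fading). The quantities model a decode-and-forward relay system where the eavesdropper overhears only the relay; $\bar\gamma$'s are average SNRs, $\mathcal{R}_1$ the secrecy capacity and $\mathcal{P}_1$ the secrecy outage probability. *)

theory Defs
  imports "HOL-Probability.Probability"
begin

definition CN01_density :: "complex \<Rightarrow> ennreal" where
  "CN01_density z = ennreal (exp (- (cmod z)\<^sup>2) / pi)"

text \<open>Secrecy rate of the relay-to-destination hop (gD = average SNR at D, a = alpha, b = beta,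
  so gR = a*gD and gE = gR/b).\<close>
definition R_RD :: "real \<Rightarrow> real \<Rightarrow> real \<Rightarrow> complex \<Rightarrow> complex \<Rightarrow> real" where
  "R_RD a b gD hRD hRE =
     max (log 2 ((1 + gD * (cmod hRD)\<^sup>2) / (1 + (a * gD / b) * (cmod hRE)\<^sup>2))) 0"

definition R_SR :: "real \<Rightarrow> real \<Rightarrow> complex \<Rightarrow> real" where
  "R_SR a gD hSR = log 2 (1 + a * gD * (cmod hSR)\<^sup>2)"

definition R1 :: "real \<Rightarrow> real \<Rightarrow> real \<Rightarrow> complex \<Rightarrow> complex \<Rightarrow> complex \<Rightarrow> real" where
  "R1 a b gD hSR hRD hRE = max (min (R_RD a b gD hRD hRE) (R_SR a gD hSR)) 0"

text \<open>Secrecy outage probability; channel h 0 = h_{S,R}, h 1 = h_{R,D}, h 2 = h_{R,E}.\<close>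
definition P1 :: "'w measure \<Rightarrow> (nat \<Rightarrow> 'w \<Rightarrow> complex) \<Rightarrow> real \<Rightarrow> real \<Rightarrow> real \<Rightarrow> real \<Rightarrow> real" where
  "P1 M h a b Rt gD = measure M {\<omega> \<in> space M. R1 a b gD (h 0 \<omega>) (h 1 \<omega>) (h 2 \<omega>) < Rt}"

definition P1_lim :: "real \<Rightarrow> real \<Rightarrow> real \<Rightarrow> real" where
  "P1_lim a b Rt = 1 - 1 / (1 + (a / b) * 2 powr Rt)"

definition M1_hat :: "real \<Rightarrow> real \<Rightarrow> real \<Rightarrow> real" where
  "M1_hat a b Rt = (2 powr Rt - 1) * (1 + 1 / a) / (1 + (a / b) * 2 powr Rt)"

end

theory Submission
  imports Defs "HOL-Real_Asymp.Real_Asymp"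
begin


lemma emeasure_cball_complex: "r \<ge> 0 \<Longrightarrow> emeasure lborel (cball (0::complex) r) = ennreal (pi * r^2)"
  by (simp add: emeasure_cball eval_unit_ball_vol)

lemma exp_tail_Icc:
  assumes "r \<le> a"
  shows "(\<integral>\<^sup>+t. ennreal (exp (-t)) * indicator {r..a} t \<partial>lborel) = ennreal (exp (-r) - exp (-a))"
proof -
  have "(\<integral>\<^sup>+t. ennreal (exp (-t)) * indicator {r..a} t \<partial>lborel) = ennreal ((\<lambda>t. - exp (-t)) a - (\<lambda>t. - exp (-t)) r)"
    by (rule nn_integral_FTC_Icc) (auto intro!: derivative_eq_intros assms)
  then show ?thesis by simp
qed

lemma texp_Icc:
  assumes "0 \<le> a"
  shows "(\<integral>\<^sup>+t. ennreal (pi * t * exp (-t)) * indicator {0..a} t \<partial>lborel) = ennreal (pi - pi * (a+1) * exp (-a))"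
proof -
  have "(\<integral>\<^sup>+t. ennreal (pi * t * exp (-t)) * indicator {0..a} t \<partial>lborel) = ennreal ((\<lambda>t. - pi * (t+1) * exp (-t)) a - (\<lambda>t. - pi * (t+1) * exp (-t)) 0)"
    by (rule nn_integral_FTC_Icc) (auto intro!: derivative_eq_intros assms simp: algebra_simps)
  then show ?thesis by (simp add: algebra_simps)
qed

lemma norm_le_sqrt_iff': "cmod z \<le> sqrt t \<longleftrightarrow> (cmod z)\<^sup>2 \<le> t"
proof -
  have "cmod z = sqrt ((cmod z)\<^sup>2)" by simp
  then have "cmod z \<le> sqrt t \<longleftrightarrow> sqrt ((cmod z)\<^sup>2) \<le> sqrt t" by simp
  then show ?thesis by (simp only: real_sqrt_le_iff)
qed

lemma gauss_ball:
  assumes a: "0 \<le> a"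
  shows "(\<integral>\<^sup>+z. ennreal (exp (- (cmod z)\<^sup>2)) * indicator (cball 0 (sqrt a)) z \<partial>(lborel::complex measure))
     = ennreal (pi * (1 - exp (-a)))"
proof -
  have pt: "ennreal (exp (- (cmod z)\<^sup>2)) * indicator (cball 0 (sqrt a)) z
     = ennreal (exp (-a)) * indicator (cball 0 (sqrt a)) z +
       (\<integral>\<^sup>+t. ennreal (exp (-t)) * indicator {0..a} t * indicator (cball 0 (sqrt t)) z \<partial>lborel)" for z :: complex
  proof (cases "z \<in> cball 0 (sqrt a)")
    case True
    then have za: "(cmod z)\<^sup>2 \<le> a" using a
      by (simp add: norm_le_sqrt_iff')
    have "(\<integral>\<^sup>+t. ennreal (exp (-t)) * indicator {0..a} t * indicator (cball 0 (sqrt t)) z \<partial>lborel)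
       = (\<integral>\<^sup>+t. ennreal (exp (-t)) * indicator {(cmod z)\<^sup>2..a} t \<partial>lborel)"
      by (intro nn_integral_cong) (auto simp: indicator_def norm_le_sqrt_iff' dest: order_trans[OF zero_le_power2[of "cmod z"]])
    also have "\<dots> = ennreal (exp (- (cmod z)\<^sup>2) - exp (-a))" by (rule exp_tail_Icc[OF za])
    finally show ?thesis using True za
      by (simp add: ennreal_plus[symmetric] del: ennreal_plus)
  next
    case False
    have "(\<integral>\<^sup>+t. ennreal (exp (-t)) * indicator {0..a} t * indicator (cball 0 (sqrt t)) z \<partial>lborel) = 0"
      using False by (intro nn_integral_zero') (auto simp: indicator_def norm_le_sqrt_iff')
    then show ?thesis using False by simp
  qed
  have cb[measurable]: "cball (0::complex) (sqrt a) \<in> sets borel" by (simp add: borel_closed)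
  have meas[measurable]: "(\<lambda>(z::complex,t::real). ennreal (exp (-t)) * indicator {0..a} t * indicator (cball 0 (sqrt t)) z) \<in> borel_measurable (lborel \<Otimes>\<^sub>M lborel)"
  proof -
    have "(\<lambda>(z::complex,t::real). ennreal (exp (-t)) * indicator {0..a} t * indicator (cball 0 (sqrt t)) z)
      = (\<lambda>p. ennreal (exp (- snd p)) * indicator {0..a} (snd p) * (if dist 0 (fst p) \<le> sqrt (snd p) then 1 else 0))"
      by (auto simp: fun_eq_iff indicator_def)
    also have "\<dots> \<in> borel_measurable (lborel \<Otimes>\<^sub>M lborel)" by measurable
    finally show ?thesis .
  qed
  have ps: "pair_sigma_finite (lborel::complex measure) (lborel::real measure)"
    by (simp add: pair_sigma_finite_def lborel.sigma_finite_measure_axioms)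
  have "(\<integral>\<^sup>+z. ennreal (exp (- (cmod z)\<^sup>2)) * indicator (cball 0 (sqrt a)) z \<partial>(lborel::complex measure))
     = (\<integral>\<^sup>+z. ennreal (exp (-a)) * indicator (cball 0 (sqrt a)) z \<partial>(lborel::complex measure)) +
       (\<integral>\<^sup>+z. (\<integral>\<^sup>+t. ennreal (exp (-t)) * indicator {0..a} t * indicator (cball 0 (sqrt t)) z \<partial>lborel) \<partial>(lborel::complex measure))"
    unfolding pt by (subst nn_integral_add) (auto intro!: lborel.borel_measurable_nn_integral[OF meas])
  also have "(\<integral>\<^sup>+z. (\<integral>\<^sup>+t. ennreal (exp (-t)) * indicator {0..a} t * indicator (cball 0 (sqrt t)) z \<partial>lborel) \<partial>(lborel::complex measure))
     = (\<integral>\<^sup>+t. (\<integral>\<^sup>+z. ennreal (exp (-t)) * indicator {0..a} t * indicator (cball 0 (sqrt t)) z \<partial>(lborel::complex measure)) \<partial>lborel)"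
    by (rule pair_sigma_finite.Fubini'[OF ps, symmetric]) measurable
  also have "\<dots> = (\<integral>\<^sup>+t. ennreal (pi * t * exp (-t)) * indicator {0..a} t \<partial>lborel)"
  proof (intro nn_integral_cong)
    fix t :: real
    show "(\<integral>\<^sup>+z. ennreal (exp (-t)) * indicator {0..a} t * indicator (cball 0 (sqrt t)) z \<partial>(lborel::complex measure))
      = ennreal (pi * t * exp (-t)) * indicator {0..a} t"
    proof (cases "t \<in> {0..a}")
      case True
      then have t: "0 \<le> t" by simp
      have "(\<integral>\<^sup>+z. ennreal (exp (-t)) * indicator {0..a} t * indicator (cball 0 (sqrt t)) z \<partial>(lborel::complex measure))
         = ennreal (exp (-t)) * emeasure lborel (cball (0::complex) (sqrt t))"
        using True by (simp add: nn_integral_cmult_indicator borel_closed)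
      also have "\<dots> = ennreal (pi * t * exp (-t))"
        using t by (simp add: emeasure_cball_complex ennreal_mult[symmetric] mult.commute)
      finally show ?thesis using True by simp
    qed simp
  qed
  also have "\<dots> = ennreal (pi - pi * (a+1) * exp (-a))" by (rule texp_Icc[OF a])
  also have "(\<integral>\<^sup>+z. ennreal (exp (-a)) * indicator (cball 0 (sqrt a)) z \<partial>(lborel::complex measure))
      = ennreal (exp (-a) * (pi * a))"
    using a by (simp add: nn_integral_cmult emeasure_cball_complex ennreal_mult)
  also have "ennreal (exp (-a) * (pi * a)) + ennreal (pi - pi * (a+1) * exp (-a)) = ennreal (pi * (1 - exp (-a)))"
  proof -
    have "pi * (a+1) * exp (-a) \<le> pi"
    proof -
      have "(a+1) \<le> exp a" using exp_ge_add_one_self[of a] by (simp add: add.commute)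
      then have "(a+1) * exp (-a) \<le> 1" by (simp add: exp_minus field_simps)
      then show ?thesis by (simp add: mult.assoc)
    qed
    then show ?thesis using a
      by (subst ennreal_plus[symmetric]) (auto simp: algebra_simps)
  qed
  finally show ?thesis .
qed

lemma exp_sq:
  assumes P: "prob_space M" and D: "distributed M lborel h CN01_density"
  shows "distributed M lborel (\<lambda>\<omega>. (cmod (h \<omega>))\<^sup>2) (exponential_density 1)"
proof (rule exponential_distributedI)
  have hm[measurable]: "h \<in> borel_measurable M" using D by (simp add: distributed_def)
  show "(\<lambda>\<omega>. (cmod (h \<omega>))\<^sup>2) \<in> borel_measurable M" by measurable
  show "(0::real) < 1" by simp
  fix a :: real assume a: "0 \<le> a"
  have "{x \<in> space M. (cmod (h x))\<^sup>2 \<le> a} = h -` cball 0 (sqrt a) \<inter> space M"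
    by (auto simp: norm_le_sqrt_iff')
  then have "emeasure M {x \<in> space M. (cmod (h x))\<^sup>2 \<le> a} = (\<integral>\<^sup>+z. CN01_density z * indicator (cball 0 (sqrt a)) z \<partial>lborel)"
    using distributed_emeasure[OF D, of "cball 0 (sqrt a)"] by (simp add: borel_closed)
  also have "\<dots> = (\<integral>\<^sup>+z. ennreal (1/pi) * (ennreal (exp (- (cmod z)\<^sup>2)) * indicator (cball 0 (sqrt a)) z) \<partial>lborel)"
    by (intro nn_integral_cong) (simp add: CN01_density_def divide_inverse ennreal_mult mult_ac)
  also have "\<dots> = ennreal (1/pi) * ennreal (pi * (1 - exp (-a)))"
  proof -
    have cb[measurable]: "cball (0::complex) (sqrt a) \<in> sets borel" by (simp add: borel_closed)
    show ?thesis by (subst nn_integral_cmult) (measurable, simp add: gauss_ball[OF a])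
  qed
  also have "\<dots> = ennreal (1 - exp (- a * 1))"
    using a by (subst ennreal_mult[symmetric]) auto
  also have "\<dots> = 1 - ennreal (exp (- a * 1))"
    using ennreal_minus[of "exp(-a*1)" 1] by simp
  finally show "emeasure M {x \<in> space M. (cmod (h x))\<^sup>2 \<le> a} = 1 - ennreal (exp (- a * 1))" .
qed


lemma exp_lambda_atLeast:
  assumes l: "0 < l" and c: "0 \<le> c"
  shows "(\<integral>\<^sup>+z. ennreal (exp (- l * z)) * indicator {c..} z \<partial>lborel) = ennreal (exp (- l * c) / l)"
proof -
  have lim: "((\<lambda>z. - exp (- l * z) / l) \<longlongrightarrow> 0) at_top" using l by real_asymp
  have "(\<integral>\<^sup>+z. ennreal (exp (- l * z)) * indicator {c..} z \<partial>lborel) = ennreal (0 - (- exp (- l * c) / l))"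
    by (rule nn_integral_FTC_atLeast[OF _ _ _ lim]) (use l in \<open>auto intro!: derivative_eq_intros\<close>)
  then show ?thesis by simp
qed

lemma expdens_tail:
  assumes c: "0 \<le> c"
  shows "(\<integral>\<^sup>+x. ennreal (exponential_density 1 x) * indicator {c..} x \<partial>lborel) = ennreal (exp (- c))"
proof -
  have "(\<integral>\<^sup>+x. ennreal (exponential_density 1 x) * indicator {c..} x \<partial>lborel)
     = (\<integral>\<^sup>+z. ennreal (exp (- 1 * z)) * indicator {c..} z \<partial>lborel)"
    using c by (intro nn_integral_cong) (auto simp: exponential_density_def indicator_def)
  also have "\<dots> = ennreal (exp (- c))" using exp_lambda_atLeast[of 1 c] c by simp
  finally show ?thesis .
qed

lemma (in prob_space) exp_prob_ge:
  assumes D: "distributed M lborel X (exponential_density 1)" and u: "0 \<le> u"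
  shows "prob {\<omega> \<in> space M. u \<le> X \<omega>} = exp (- u)"
proof -
  have "emeasure M {\<omega> \<in> space M. u \<le> X \<omega>} = emeasure M (X -` {u..} \<inter> space M)"
    by (intro arg_cong[where f="emeasure M"]) auto
  also have "\<dots> = ennreal (exp (- u))"
    using distributed_emeasure[OF D, of "{u..}"] expdens_tail[OF u] by simp
  finally show ?thesis by (simp add: emeasure_eq_measure)
qed


lemma (in prob_space) exp_prob_joint:
  assumes DZ: "distributed M lborel Z (exponential_density 1)"
    and DX: "distributed M lborel X (exponential_density 1)"
    and I: "indep_var lborel Z lborel X" and v: "0 \<le> v" and w: "0 \<le> w"
  shows "prob {\<omega> \<in> space M. v + w * Z \<omega> \<le> X \<omega>} = exp (- v) / (1 + w)"
proof -
  let ?f = "\<lambda>x. ennreal (exponential_density 1 x)"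
  let ?S = "{p :: real \<times> real. v + w * fst p \<le> snd p}"
  have P: "Measurable.pred (lborel \<Otimes>\<^sub>M lborel) (\<lambda>p::real\<times>real. v + w * fst p \<le> snd p)" by measurable
  have S[measurable]: "?S \<in> sets (lborel \<Otimes>\<^sub>M lborel)"
  proof -
    have "?S = {p \<in> space (lborel \<Otimes>\<^sub>M lborel). v + w * fst p \<le> snd p}" by (simp add: space_pair_measure)
    also have "\<dots> \<in> sets (lborel \<Otimes>\<^sub>M lborel)" using P by (simp add: pred_def)
    finally show ?thesis .
  qed
  have rvZ[measurable]: "Z \<in> borel_measurable M" using DZ by (simp add: distributed_def)
  have rvX[measurable]: "X \<in> borel_measurable M" using DX by (simp add: distributed_def)
  have J: "distr M lborel Z \<Otimes>\<^sub>M distr M lborel X = distr M (lborel \<Otimes>\<^sub>M lborel) (\<lambda>x. (Z x, X x))"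
    using I by (simp add: indep_var_distribution_eq)
  have dZ: "distr M lborel Z = density lborel ?f" using DZ by (simp add: distributed_def)
  have dX: "distr M lborel X = density lborel ?f" using DX by (simp add: distributed_def)
  interpret Dn: prob_space "density lborel ?f" by (rule prob_space_exponential_density) simp
  have "emeasure M {\<omega> \<in> space M. v + w * Z \<omega> \<le> X \<omega>} = emeasure (distr M (lborel \<Otimes>\<^sub>M lborel) (\<lambda>x. (Z x, X x))) ?S"
  proof -
    have S': "?S \<in> sets (borel \<Otimes>\<^sub>M borel)" using S by (simp add: sets_pair_measure_cong[OF sets_lborel sets_lborel])
    show ?thesis by (subst emeasure_distr) (use S' in \<open>auto intro!: arg_cong[where f="emeasure M"]\<close>)
  qed
  also have "\<dots> = emeasure (density lborel ?f \<Otimes>\<^sub>M density lborel ?f) ?S"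
    unfolding J[symmetric] dZ dX ..
  also have "\<dots> = (\<integral>\<^sup>+z. emeasure (density lborel ?f) (Pair z -` ?S) \<partial>density lborel ?f)"
    by (rule Dn.emeasure_pair_measure_alt) (use S in simp)
  also have "\<dots> = (\<integral>\<^sup>+z. ?f z * emeasure (density lborel ?f) (Pair z -` ?S) \<partial>lborel)"
    by (rule nn_integral_density) auto
  also have "\<dots> = (\<integral>\<^sup>+z. ennreal (exp (-v)) * (ennreal (exp (- (1+w) * z)) * indicator {0..} z) \<partial>lborel)"
  proof (intro nn_integral_cong)
    fix z :: real
    show "?f z * emeasure (density lborel ?f) (Pair z -` ?S) = ennreal (exp (-v)) * (ennreal (exp (- (1+w) * z)) * indicator {0..} z)"
    proof (cases "0 \<le> z")
      case True
      have "Pair z -` ?S = {v + w * z..}" by auto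
      then have "emeasure (density lborel ?f) (Pair z -` ?S) = (\<integral>\<^sup>+x. ?f x * indicator {v + w * z..} x \<partial>lborel)"
        by (simp add: emeasure_density)
      also have "\<dots> = ennreal (exp (- (v + w * z)))"
        using v w True by (intro expdens_tail) simp
      finally show ?thesis using True
        by (simp add: exponential_density_def ennreal_mult[symmetric] mult_exp_exp algebra_simps)
    qed (simp add: exponential_density_def)
  qed
  also have "\<dots> = ennreal (exp (-v)) * ennreal (exp (- (1+w) * 0) / (1+w))"
    using w exp_lambda_atLeast[of "1+w" 0] by (subst nn_integral_cmult) auto
  also have "\<dots> = ennreal (exp (- v) / (1 + w))"
    using w by (simp add: ennreal_mult[symmetric])
  finally show ?thesis using w by (simp add: emeasure_eq_measure)
qed


lemma R1_iff:
  assumes Rt: "0 < Rt" and a: "0 < a" and b: "0 < b" and g: "0 < g"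
  shows "R1 a b g z0 z1 z2 < Rt \<longleftrightarrow>
     \<not> ((2 powr Rt - 1) / (a * g) \<le> (cmod z0)\<^sup>2 \<and>
        (2 powr Rt - 1) / g + (2 powr Rt * a / b) * (cmod z2)\<^sup>2 \<le> (cmod z1)\<^sup>2)"
proof -
  define t where "t = 2 powr Rt"
  define x0 where "x0 = (cmod z0)\<^sup>2"
  define x1 where "x1 = (cmod z1)\<^sup>2"
  define x2 where "x2 = (cmod z2)\<^sup>2"
  have x0: "0 \<le> x0" and x1: "0 \<le> x1" and x2: "0 \<le> x2" by (simp_all add: x0_def x1_def x2_def)
  have SR: "R_SR a g z0 < Rt \<longleftrightarrow> x0 < (t - 1) / (a * g)"
  proof -
    have pos: "0 < 1 + a * g * x0" using a g x0 by (simp add: add_pos_nonneg)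
    have "R_SR a g z0 < Rt \<longleftrightarrow> 1 + a * g * x0 < t"
      unfolding R_SR_def t_def x0_def[symmetric] using pos by (simp add: log_less_iff)
    also have "\<dots> \<longleftrightarrow> x0 < (t - 1) / (a * g)"
      using a g by (simp add: field_simps)
    finally show ?thesis .
  qed
  have RD: "R_RD a b g z1 z2 < Rt \<longleftrightarrow> x1 < (t - 1) / g + (t * a / b) * x2"
  proof -
    have p1: "0 < 1 + g * x1" using g x1 by (simp add: add_pos_nonneg)
    have p2: "0 < 1 + a * g / b * x2" using a b g x2 by (simp add: add_pos_nonneg)
    have "R_RD a b g z1 z2 < Rt \<longleftrightarrow> log 2 ((1 + g * x1) / (1 + a * g / b * x2)) < Rt"
      unfolding R_RD_def x1_def[symmetric] x2_def[symmetric] using Rt by simp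
    also have "\<dots> \<longleftrightarrow> (1 + g * x1) / (1 + a * g / b * x2) < t"
      using p1 p2 by (simp add: log_less_iff t_def)
    also have "\<dots> \<longleftrightarrow> 1 + g * x1 < t * (1 + a * g / b * x2)"
      using p2 by (simp add: divide_less_eq)
    also have "\<dots> \<longleftrightarrow> x1 < (t - 1) / g + (t * a / b) * x2"
      using g b by (simp add: field_simps)
    finally show ?thesis .
  qed
  have "R1 a b g z0 z1 z2 < Rt \<longleftrightarrow> R_RD a b g z1 z2 < Rt \<or> R_SR a g z0 < Rt"
    unfolding R1_def using Rt by auto
  then show ?thesis unfolding RD SR by (auto simp: t_def x0_def x1_def x2_def)
qed


theorem theorem3:
  fixes M :: "'w measure" and h :: "nat \<Rightarrow> 'w \<Rightarrow> complex"
    and a b Rt :: real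
  assumes "prob_space M"
    and "Rt > 0" and "a > 0" and "b > 0"
    and "\<And>i. i \<in> {0, 1, 2} \<Longrightarrow> distributed M lborel (h i) CN01_density"
    and "prob_space.indep_vars M (\<lambda>_. borel) h {0, 1, 2}"
  shows "(P1 M h a b Rt \<longlongrightarrow> P1_lim a b Rt) at_top
       \<and> ((\<lambda>gD. gD * (P1 M h a b Rt gD - P1_lim a b Rt)) \<longlongrightarrow> M1_hat a b Rt) at_top"
proof -
  interpret prob_space M by (rule assms(1))
  have Rt: "0 < Rt" and a: "0 < a" and b: "0 < b" using assms by auto
  define X where "X i \<omega> = (cmod (h i \<omega>))\<^sup>2" for i \<omega>
  have DX: "distributed M lborel (X i) (exponential_density 1)" if "i \<in> {0,1,2}" for i
    unfolding X_def by (rule exp_sq[OF assms(1) assms(5)[OF that]])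
  have IX: "indep_vars (\<lambda>_. borel) X {0,1,2}"
    unfolding X_def by (rule indep_vars_compose2[OF assms(6)]) measurable
  define t where "t = 2 powr Rt"
  have t1: "1 < t" using Rt by (simp add: t_def)
  define w where "w = t * a / b"
  have w: "0 < w" using t1 a b by (simp add: w_def)
  define k where "k = (t - 1) / a + (t - 1)"
  have I0: "indep_var (borel \<Otimes>\<^sub>M borel) (\<lambda>\<omega>. (X 0 \<omega>, 0::real)) (borel \<Otimes>\<^sub>M borel) (\<lambda>\<omega>. (X 2 \<omega>, X 1 \<omega>))"
  proof -
    have "indep_var (PiM {0} (\<lambda>_. borel)) (\<lambda>\<omega>. restrict (\<lambda>i. X i \<omega>) {0})
                    (PiM {1,2} (\<lambda>_. borel)) (\<lambda>\<omega>. restrict (\<lambda>i. X i \<omega>) {1,2})"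
      by (rule indep_var_restrict[OF IX]) auto
    then have "indep_var (borel \<Otimes>\<^sub>M borel) ((\<lambda>f. (f 0, 0::real)) \<circ> (\<lambda>\<omega>. restrict (\<lambda>i. X i \<omega>) {0}))
                 (borel \<Otimes>\<^sub>M borel) ((\<lambda>f. (f 2, f 1)) \<circ> (\<lambda>\<omega>. restrict (\<lambda>i. X i \<omega>) {1,2}))"
      by (rule indep_var_compose) measurable
    moreover have "((\<lambda>f. (f 0, 0::real)) \<circ> (\<lambda>\<omega>. restrict (\<lambda>i. X i \<omega>) {0})) = (\<lambda>\<omega>. (X 0 \<omega>, 0::real))" by (auto simp: fun_eq_iff)
    moreover have "((\<lambda>f. (f 2, f 1)) \<circ> (\<lambda>\<omega>. restrict (\<lambda>i. X i \<omega>) {1,2})) = (\<lambda>\<omega>. (X 2 \<omega>, X 1 \<omega>))" by (auto simp: fun_eq_iff)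
    ultimately show ?thesis by simp
  qed
  have I21: "indep_var lborel (X 2) lborel (X 1)"
  proof -
    have "indep_var (PiM {2} (\<lambda>_. borel)) (\<lambda>\<omega>. restrict (\<lambda>i. X i \<omega>) {2})
                    (PiM {1} (\<lambda>_. borel)) (\<lambda>\<omega>. restrict (\<lambda>i. X i \<omega>) {1})"
      by (rule indep_var_restrict[OF IX]) auto
    then have "indep_var lborel ((\<lambda>f. f 2) \<circ> (\<lambda>\<omega>. restrict (\<lambda>i. X i \<omega>) {2}))
                 lborel ((\<lambda>f. f 1) \<circ> (\<lambda>\<omega>. restrict (\<lambda>i. X i \<omega>) {1}))"
      by (rule indep_var_compose) measurable
    moreover have "((\<lambda>f. f 2) \<circ> (\<lambda>\<omega>. restrict (\<lambda>i. X i \<omega>) {2})) = X 2" by (auto simp: fun_eq_iff)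
    moreover have "((\<lambda>f. f 1) \<circ> (\<lambda>\<omega>. restrict (\<lambda>i. X i \<omega>) {1})) = X 1" by (auto simp: fun_eq_iff)
    ultimately show ?thesis by simp
  qed
  have closed: "P1 M h a b Rt g = 1 - exp (- k / g) / (1 + w)" if g: "0 < g" for g
  proof -
    define u where "u = (t - 1) / (a * g)"
    define v where "v = (t - 1) / g"
    have u: "0 \<le> u" and v: "0 \<le> v" using t1 a g by (simp_all add: u_def v_def)
    define A where "A = {\<omega> \<in> space M. u \<le> X 0 \<omega>}"
    define B where "B = {\<omega> \<in> space M. v + w * X 2 \<omega> \<le> X 1 \<omega>}"
    have [measurable]: "X i \<in> borel_measurable M" if "i \<in> {0,1,2}" for i
      using DX[OF that] by (simp add: distributed_def)
    have Am: "A \<in> events" unfolding A_def by measurable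
    have Bm: "B \<in> events" unfolding B_def by measurable
    have ev: "{\<omega> \<in> space M. R1 a b g (h 0 \<omega>) (h 1 \<omega>) (h 2 \<omega>) < Rt} = space M - (A \<inter> B)"
      using R1_iff[OF Rt a b g] by (auto simp: A_def B_def X_def u_def v_def w_def t_def)
    have "prob (A \<inter> B) = prob A * prob B"
    proof -
      have S: "{p :: real \<times> real. v + w * fst p \<le> snd p} \<in> sets (borel \<Otimes>\<^sub>M borel)"
      proof -
        have P: "Measurable.pred (borel \<Otimes>\<^sub>M borel) (\<lambda>p::real\<times>real. v + w * fst p \<le> snd p)" by measurable
        have "{p :: real \<times> real. v + w * fst p \<le> snd p} = {p \<in> space (borel \<Otimes>\<^sub>M borel). v + w * fst p \<le> snd p}"
          by (simp add: space_pair_measure)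
        also have "\<dots> \<in> sets (borel \<Otimes>\<^sub>M borel)" using P by (simp add: pred_def)
        finally show ?thesis .
      qed
      have "prob ((\<lambda>\<omega>. ((X 0 \<omega>, 0::real), (X 2 \<omega>, X 1 \<omega>))) -` (({u..} \<times> UNIV) \<times> {p. v + w * fst p \<le> snd p}) \<inter> space M)
         = prob ((\<lambda>\<omega>. (X 0 \<omega>, 0::real)) -` ({u..} \<times> UNIV) \<inter> space M) * prob ((\<lambda>\<omega>. (X 2 \<omega>, X 1 \<omega>)) -` {p. v + w * fst p \<le> snd p} \<inter> space M)"
        by (rule indep_varD[OF I0]) (use S in auto)
      moreover have "(\<lambda>\<omega>. ((X 0 \<omega>, 0::real), (X 2 \<omega>, X 1 \<omega>))) -` (({u..} \<times> UNIV) \<times> {p. v + w * fst p \<le> snd p}) \<inter> space M = A \<inter> B"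
        by (auto simp: A_def B_def)
      moreover have "(\<lambda>\<omega>. (X 0 \<omega>, 0::real)) -` ({u..} \<times> UNIV) \<inter> space M = A" by (auto simp: A_def)
      moreover have "(\<lambda>\<omega>. (X 2 \<omega>, X 1 \<omega>)) -` {p. v + w * fst p \<le> snd p} \<inter> space M = B" by (auto simp: B_def)
      ultimately show ?thesis by simp
    qed
    moreover have "prob A = exp (- u)" unfolding A_def by (rule exp_prob_ge[OF DX u]) simp
    moreover have "prob B = exp (- v) / (1 + w)" unfolding B_def
      by (rule exp_prob_joint[OF DX DX I21 v]) (use w in auto)
    moreover have "prob (space M - (A \<inter> B)) = 1 - prob (A \<inter> B)"
      using Am Bm by (simp add: prob_compl)
    moreover have "exp (- u) * exp (- v) = exp (- k / g)"
    proof -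
      have e: "-u + -v = - k / g" unfolding u_def v_def k_def using a g by (simp add: field_simps)
      have "exp (- u) * exp (- v) = exp (-u + -v)" by (rule exp_add[symmetric])
      then show ?thesis by (simp only: e)
    qed
    ultimately show ?thesis unfolding P1_def ev by simp
  qed
  have ev_eq: "\<forall>\<^sub>F g in at_top. 1 - exp (- k / g) / (1 + w) = P1 M h a b Rt g"
    using eventually_gt_at_top[of 0] by eventually_elim (simp add: closed)
  have ev_eq2: "\<forall>\<^sub>F g in at_top. g * (1 - exp (- k / g)) / (1 + w) = g * (P1 M h a b Rt g - P1_lim a b Rt)"
    using eventually_gt_at_top[of 0] 
  proof eventually_elim
    case (elim g)
    have pl: "P1_lim a b Rt = 1 - 1 / (1 + w)" by (simp add: P1_lim_def w_def t_def mult.commute)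
    have e: "(1 - exp (- k / g) / (1 + w)) - (1 - 1 / (1 + w)) = (1 - exp (- k / g)) / (1 + w)"
      by (simp add: diff_divide_distrib)
    show ?case unfolding closed[OF elim] pl e by simp
  qed
  have L1: "((\<lambda>g. 1 - exp (- k / g) / (1 + w)) \<longlongrightarrow> P1_lim a b Rt) at_top"
  proof -
    have "((\<lambda>g::real. exp (-k/g)) \<longlongrightarrow> 1) at_top" by real_asymp
    then have "((\<lambda>g. 1 - exp (- k / g) / (1 + w)) \<longlongrightarrow> 1 - 1 / (1 + w)) at_top"
      using w by (intro tendsto_intros) auto
    moreover have "P1_lim a b Rt = 1 - 1 / (1 + w)" by (simp add: P1_lim_def w_def t_def mult.commute)
    ultimately show ?thesis by simp
  qed
  have L2: "((\<lambda>g. g * (1 - exp (- k / g)) / (1 + w)) \<longlongrightarrow> M1_hat a b Rt) at_top"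
  proof -
    have "((\<lambda>g::real. g * (1 - exp (-k/g))) \<longlongrightarrow> k) at_top" by real_asymp
    then have "((\<lambda>g. g * (1 - exp (- k / g)) / (1 + w)) \<longlongrightarrow> k / (1 + w)) at_top"
      using w by (intro tendsto_intros) auto
    moreover have "M1_hat a b Rt = k / (1 + w)"
      using a by (simp add: M1_hat_def k_def w_def t_def field_simps)
    ultimately show ?thesis by simp
  qed
  show ?thesis
    using Lim_transform_eventually[OF L1 ev_eq] Lim_transform_eventually[OF L2 ev_eq2] by simp
qed

end
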